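(* Let $\theta_1,\theta_2\in\Theta$, $\theta_\alpha=\alpha\theta_1+(1-\alpha)\theta_2$, and assume the maximiser $\alpha^*$ of $\alpha\mapsto D^{\mathrm w}_{B,\alpha}(p_{\theta_1},p_{\theta_2})$ over $[0,1]$ exists, is unique and lies in $(0,1)$. Then \[ D_C^{\mathrm w}(p_{\theta_1},p_{\theta_2})=D^{\mathrm w}_{B,\alpha^*}(p_{\theta_1},p_{\theta_2})=\alpha^*F(\theta_1)+(1-\alpha^* )F(\theta_2)-\hat F(\theta_{\alpha^*}), \] $\theta_{\alpha^*}$ satisfies the bisector condition $B^{\mathrm w}_{\varphi,F}(\theta_1,\theta_{\alpha^*})=B^{\mathrm w}_{\varphi,F}(\theta_2,\theta_{\alpha^*})$, and \[ D_C^{\mathrm w}(p_{\theta_1},p_{\theta_2})=\frac{B^{\mathrm w}_{\varphi,F}(\theta_1,\theta_{\alpha^*})}{E_\varphi(\theta_{\alpha^*})}-\ln E_\varphi(\theta_{\alpha^*})=\frac{B^{\mathrm w}_{\varphi,F}(\theta_2,\theta_{\alpha^*})}{E_\varphi(\theta_{\alpha^*})}-\ln E_\varphi(\theta_{\alpha^*}). \]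
   Context: Let $\mu$ be a $\sigma$-finite measure on $\mathcal X$ and $\varphi\ge0$ a measurable weight. Let $\{p_\theta:\theta\in\Theta\}$, $\Theta\subset\mathbb R^d$ open and convex, be a regular exponential family $p_\theta(x)=\exp\{\theta^{\mathrm T}t(x)-F(\theta)+k(x)\}$. Set $E_\varphi(\theta)=\int\varphi p_\theta\,\mathrm d\mu\in(0,\infty)$ and $\hat F(\theta)=\ln\int\varphi(x)e^{\theta^{\mathrm T}t(x)+k(x)}\,\mathrm d\mu(x)=F(\theta)+\ln E_\varphi(\theta)$, finite and differentiable on $\Theta$. Weighted affinity $\rho^{\mathrm w}_\alpha(p,q)=\int\varphi\,p^\alpha q^{1-\alpha}\,\mathrm d\mu$; $D^{\mathrm w}_{B,\alpha}(p,q)=-\ln\rho^{\mathrm w}_\alpha(p,q)$; $D^{\mathrm w}_C(p,q)=\max_{\alpha\in[0,1]}D^{\mathrm w}_{B,\alpha}(p,q)$. Weighted Bregman divergence: $B^{\mathrm w}_{\varphi,F}(\theta,\theta')=E_\varphi(\theta')\big[F(\theta)-F(\theta')-(\theta-\theta')^{\mathrm T}\nabla\hat F(\theta')\big]$. *)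

theory Defs
  imports "HOL-Analysis.Analysis"
begin

definition expfam :: "('x \<Rightarrow> 'd::euclidean_space) \<Rightarrow> ('x \<Rightarrow> real) \<Rightarrow> ('d \<Rightarrow> real)
    \<Rightarrow> 'd \<Rightarrow> 'x \<Rightarrow> real" where
  "expfam t k F \<theta> x = exp (inner \<theta> (t x) - F \<theta> + k x)"

definition E_w :: "'x measure \<Rightarrow> ('x \<Rightarrow> real) \<Rightarrow> ('x \<Rightarrow> real) \<Rightarrow> real" where
  "E_w M \<phi> p = (\<integral>x. \<phi> x * p x \<partial>M)"

definition rho_w :: "'x measure \<Rightarrow> ('x \<Rightarrow> real) \<Rightarrow> real \<Rightarrow> ('x \<Rightarrow> real) \<Rightarrow> ('x \<Rightarrow> real) \<Rightarrow> real" where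
  "rho_w M \<phi> \<alpha> p q = (\<integral>x. \<phi> x * p x powr \<alpha> * q x powr (1 - \<alpha>) \<partial>M)"

definition DB_w :: "'x measure \<Rightarrow> ('x \<Rightarrow> real) \<Rightarrow> real \<Rightarrow> ('x \<Rightarrow> real) \<Rightarrow> ('x \<Rightarrow> real) \<Rightarrow> real" where
  "DB_w M \<phi> \<alpha> p q = - ln (rho_w M \<phi> \<alpha> p q)"

definition DC_w :: "'x measure \<Rightarrow> ('x \<Rightarrow> real) \<Rightarrow> ('x \<Rightarrow> real) \<Rightarrow> ('x \<Rightarrow> real) \<Rightarrow> real" where
  "DC_w M \<phi> p q = (SUP \<alpha>\<in>{0..1}. DB_w M \<phi> \<alpha> p q)"

definition Fhat :: "'x measure \<Rightarrow> ('x \<Rightarrow> real) \<Rightarrow> ('x \<Rightarrow> 'd::euclidean_space) \<Rightarrow> ('x \<Rightarrow> real)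
    \<Rightarrow> 'd \<Rightarrow> real" where
  "Fhat M \<phi> t k \<theta> = ln (\<integral>x. \<phi> x * exp (inner \<theta> (t x) + k x) \<partial>M)"

definition grad :: "('d::euclidean_space \<Rightarrow> real) \<Rightarrow> 'd \<Rightarrow> 'd" where
  "grad f x = (THE D. GDERIV f x :> D)"

definition Breg_w :: "'x measure \<Rightarrow> ('x \<Rightarrow> real) \<Rightarrow> ('x \<Rightarrow> 'd::euclidean_space) \<Rightarrow> ('x \<Rightarrow> real)
    \<Rightarrow> ('d \<Rightarrow> real) \<Rightarrow> 'd \<Rightarrow> 'd \<Rightarrow> real" where
  "Breg_w M \<phi> t k F \<theta> \<theta>' = E_w M \<phi> (expfam t k F \<theta>') *
     (F \<theta> - F \<theta>' - inner (\<theta> - \<theta>') (grad (Fhat M \<phi> t k) \<theta>'))"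

end

theory Submission
  imports Defs
begin

theorem proposition3p6:
  fixes M :: "'x measure" and \<phi> :: "'x \<Rightarrow> real"
    and t :: "'x \<Rightarrow> 'd::euclidean_space" and k :: "'x \<Rightarrow> real"
    and F :: "'d \<Rightarrow> real" and \<Theta> :: "'d set"
    and \<theta>1 \<theta>2 :: 'd and \<alpha>s :: real
  assumes sf: "sigma_finite_measure M"
    and \<phi>_meas: "\<phi> \<in> borel_measurable M" and \<phi>_nonneg: "\<And>x. x \<in> space M \<Longrightarrow> \<phi> x \<ge> 0"
    and t_meas: "t \<in> borel_measurable M" and k_meas: "k \<in> borel_measurable M"
    and \<Theta>_open: "open \<Theta>" and \<Theta>_convex: "convex \<Theta>"
    and fam_int: "\<And>\<theta>. \<theta> \<in> \<Theta> \<Longrightarrow> integrable M (\<lambda>x. exp (inner \<theta> (t x) + k x))"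
    and F_def: "\<And>\<theta>. \<theta> \<in> \<Theta> \<Longrightarrow> F \<theta> = ln (\<integral>x. exp (inner \<theta> (t x) + k x) \<partial>M)"
    and E_int: "\<And>\<theta>. \<theta> \<in> \<Theta> \<Longrightarrow> integrable M (\<lambda>x. \<phi> x * expfam t k F \<theta> x)"
    and E_pos: "\<And>\<theta>. \<theta> \<in> \<Theta> \<Longrightarrow> E_w M \<phi> (expfam t k F \<theta>) > 0"
    and Fhat_diff: "\<And>\<theta>. \<theta> \<in> \<Theta> \<Longrightarrow> Fhat M \<phi> t k differentiable (at \<theta>)"
    and \<theta>1: "\<theta>1 \<in> \<Theta>" and \<theta>2: "\<theta>2 \<in> \<Theta>"
    and \<alpha>s_in: "\<alpha>s \<in> {0<..<1}"
    and \<alpha>s_max: "\<And>\<alpha>. \<alpha> \<in> {0..1} \<Longrightarrow>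
        DB_w M \<phi> \<alpha> (expfam t k F \<theta>1) (expfam t k F \<theta>2)
          \<le> DB_w M \<phi> \<alpha>s (expfam t k F \<theta>1) (expfam t k F \<theta>2)"
    and \<alpha>s_unique: "\<And>\<alpha>. \<alpha> \<in> {0..1} \<Longrightarrow>
        DB_w M \<phi> \<alpha> (expfam t k F \<theta>1) (expfam t k F \<theta>2)
          = DB_w M \<phi> \<alpha>s (expfam t k F \<theta>1) (expfam t k F \<theta>2) \<Longrightarrow> \<alpha> = \<alpha>s"
  shows
    "let p1 = expfam t k F \<theta>1; p2 = expfam t k F \<theta>2;
         \<theta>a = \<alpha>s *\<^sub>R \<theta>1 + (1 - \<alpha>s) *\<^sub>R \<theta>2;
         Ea = E_w M \<phi> (expfam t k F \<theta>a);
         B1 = Breg_w M \<phi> t k F \<theta>1 \<theta>a; B2 = Breg_w M \<phi> t k F \<theta>2 \<theta>a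
     in DC_w M \<phi> p1 p2 = DB_w M \<phi> \<alpha>s p1 p2
      \<and> DB_w M \<phi> \<alpha>s p1 p2 = \<alpha>s * F \<theta>1 + (1 - \<alpha>s) * F \<theta>2 - Fhat M \<phi> t k \<theta>a
      \<and> B1 = B2
      \<and> DC_w M \<phi> p1 p2 = B1 / Ea - ln Ea
      \<and> DC_w M \<phi> p1 p2 = B2 / Ea - ln Ea"
proof -
  define I where "I = (\<lambda>\<theta>. \<integral>x. \<phi> x * exp (inner \<theta> (t x) + k x) \<partial>M)"
  have E_eq: "E_w M \<phi> (expfam t k F \<theta>) = exp (- F \<theta>) * I \<theta>" for \<theta>
  proof -
    have "(\<lambda>x. \<phi> x * expfam t k F \<theta> x) = (\<lambda>x. exp (- F \<theta>) * (\<phi> x * exp (inner \<theta> (t x) + k x)))"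
      by (rule ext) (simp add: expfam_def exp_add exp_diff exp_minus field_simps)
    then show ?thesis unfolding E_w_def I_def by simp
  qed
  have I_pos: "I \<theta> > 0" if "\<theta> \<in> \<Theta>" for \<theta>
    using E_pos[OF that] unfolding E_eq by (simp add: zero_less_mult_iff)
  have Fhat_eq: "Fhat M \<phi> t k \<theta> = ln (I \<theta>)" for \<theta>
    unfolding Fhat_def I_def by simp
  define th where "th = (\<lambda>\<alpha>::real. \<alpha> *\<^sub>R \<theta>1 + (1 - \<alpha>) *\<^sub>R \<theta>2)"
  have th_in: "th \<alpha> \<in> \<Theta>" if "\<alpha> \<in> {0..1}" for \<alpha>
    using \<Theta>_convex \<theta>1 \<theta>2 that unfolding convex_def th_def by auto
  define g where "g = (\<lambda>\<alpha>. \<alpha> * F \<theta>1 + (1 - \<alpha>) * F \<theta>2 - Fhat M \<phi> t k (th \<alpha>))"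
  have DB_eq: "DB_w M \<phi> \<alpha> (expfam t k F \<theta>1) (expfam t k F \<theta>2) = g \<alpha>" if "\<alpha> \<in> {0..1}" for \<alpha>
  proof -
    have pw: "\<phi> x * expfam t k F \<theta>1 x powr \<alpha> * expfam t k F \<theta>2 x powr (1 - \<alpha>)
       = exp (- (\<alpha> * F \<theta>1 + (1 - \<alpha>) * F \<theta>2)) * (\<phi> x * exp (inner (th \<alpha>) (t x) + k x))" for x
    proof -
      have "expfam t k F \<theta>1 x powr \<alpha> * expfam t k F \<theta>2 x powr (1 - \<alpha>)
          = exp (\<alpha> * (inner \<theta>1 (t x) - F \<theta>1 + k x) + (1 - \<alpha>) * (inner \<theta>2 (t x) - F \<theta>2 + k x))"
        by (simp add: expfam_def powr_def mult_exp_exp)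
      also have "\<dots> = exp (- (\<alpha> * F \<theta>1 + (1 - \<alpha>) * F \<theta>2)) * exp (inner (th \<alpha>) (t x) + k x)"
        by (simp add: mult_exp_exp th_def inner_add_left algebra_simps)
      finally show ?thesis by simp
    qed
    have "rho_w M \<phi> \<alpha> (expfam t k F \<theta>1) (expfam t k F \<theta>2)
        = exp (- (\<alpha> * F \<theta>1 + (1 - \<alpha>) * F \<theta>2)) * I (th \<alpha>)"
      unfolding rho_w_def pw I_def by simp
    then show ?thesis
      using I_pos[OF th_in[OF that]]
      by (simp add: DB_w_def g_def Fhat_eq ln_mult)
  qed
  define \<theta>a where "\<theta>a = th \<alpha>s"
  have \<theta>a_in: "\<theta>a \<in> \<Theta>" using th_in \<alpha>s_in unfolding \<theta>a_def by auto
  obtain f' where f': "(Fhat M \<phi> t k has_derivative f') (at \<theta>a)"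
    using Fhat_diff[OF \<theta>a_in] unfolding differentiable_def by blast
  define D where "D = adjoint f' 1"
  have f'D: "f' h = inner h D" for h
    using adjoint_works[OF has_derivative_linear[OF f'], of h 1] unfolding D_def by simp
  have gd: "GDERIV (Fhat M \<phi> t k) \<theta>a :> D"
    unfolding gderiv_def using f' f'D by (metis ext)
  have grad_eq: "grad (Fhat M \<phi> t k) \<theta>a = D"
    unfolding grad_def
  proof (rule the_equality[where P="\<lambda>D. GDERIV (Fhat M \<phi> t k) \<theta>a :> D", OF gd])
    fix D' assume "GDERIV (Fhat M \<phi> t k) \<theta>a :> D'"
    then have "(\<lambda>h. inner h D') = (\<lambda>h. inner h D)"
      using gd unfolding gderiv_def by (rule has_derivative_unique)
    then show "D' = D" by (metis vector_eq_ldot)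
  qed
  have th_der: "(th has_derivative (\<lambda>h. h *\<^sub>R (\<theta>1 - \<theta>2))) (at \<alpha>s)"
    unfolding th_def
    by (auto intro!: derivative_eq_intros simp: algebra_simps)
  have "((\<lambda>\<alpha>. Fhat M \<phi> t k (th \<alpha>)) has_derivative (\<lambda>h. inner (h *\<^sub>R (\<theta>1 - \<theta>2)) D)) (at \<alpha>s)"
    using has_derivative_compose[OF th_der, of "Fhat M \<phi> t k" f'] f' f'D
    unfolding \<theta>a_def by (simp add: o_def)
  then have "(g has_derivative (\<lambda>h. h * F \<theta>1 - h * F \<theta>2 - inner (h *\<^sub>R (\<theta>1 - \<theta>2)) D)) (at \<alpha>s)"
    unfolding g_def by (auto intro!: derivative_eq_intros)
  then have gder: "(g has_field_derivative (F \<theta>1 - F \<theta>2 - inner (\<theta>1 - \<theta>2) D)) (at \<alpha>s)"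
    by (rule has_derivative_imp_has_field_derivative) (simp add: algebra_simps)
  have zero: "F \<theta>1 - F \<theta>2 - inner (\<theta>1 - \<theta>2) D = 0"
  proof (rule DERIV_local_max[OF gder])
    show "0 < min \<alpha>s (1 - \<alpha>s)" using \<alpha>s_in by auto
    show "\<forall>y. \<bar>\<alpha>s - y\<bar> < min \<alpha>s (1 - \<alpha>s) \<longrightarrow> g y \<le> g \<alpha>s"
    proof (intro allI impI)
      fix y assume "\<bar>\<alpha>s - y\<bar> < min \<alpha>s (1 - \<alpha>s)"
      then have y: "y \<in> {0..1}" by auto
      show "g y \<le> g \<alpha>s"
        using \<alpha>s_max[OF y] DB_eq[OF y] DB_eq \<alpha>s_in by auto
    qed
  qed
  have as01: "\<alpha>s \<in> {0..1}" using \<alpha>s_in by auto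
  have DC: "DC_w M \<phi> (expfam t k F \<theta>1) (expfam t k F \<theta>2) = g \<alpha>s"
    unfolding DC_w_def
    by (rule cSup_eq_maximum) (use as01 DB_eq \<alpha>s_max in auto)
  have Ea: "E_w M \<phi> (expfam t k F \<theta>a) = exp (- F \<theta>a) * I \<theta>a" by (rule E_eq)
  have Ipos: "I \<theta>a > 0" by (rule I_pos[OF \<theta>a_in])
  have lnEa: "ln (E_w M \<phi> (expfam t k F \<theta>a)) = - F \<theta>a + ln (I \<theta>a)"
    using Ipos by (simp add: Ea ln_mult)
  have Eapos: "E_w M \<phi> (expfam t k F \<theta>a) > 0" using E_pos[OF \<theta>a_in] .
  have B1: "Breg_w M \<phi> t k F \<theta>1 \<theta>a / E_w M \<phi> (expfam t k F \<theta>a)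
      = F \<theta>1 - F \<theta>a - inner (\<theta>1 - \<theta>a) D"
    using Eapos by (simp add: Breg_w_def grad_eq)
  have B2: "Breg_w M \<phi> t k F \<theta>2 \<theta>a / E_w M \<phi> (expfam t k F \<theta>a)
      = F \<theta>2 - F \<theta>a - inner (\<theta>2 - \<theta>a) D"
    using Eapos by (simp add: Breg_w_def grad_eq)
  have d1: "\<theta>1 - \<theta>a = (1 - \<alpha>s) *\<^sub>R (\<theta>1 - \<theta>2)"
    unfolding \<theta>a_def th_def by (simp add: algebra_simps)
  have d2: "\<theta>2 - \<theta>a = (- \<alpha>s) *\<^sub>R (\<theta>1 - \<theta>2)"
    unfolding \<theta>a_def th_def by (simp add: algebra_simps)
  have gas: "g \<alpha>s = \<alpha>s * F \<theta>1 + (1 - \<alpha>s) * F \<theta>2 - ln (I \<theta>a)"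
    unfolding g_def \<theta>a_def Fhat_eq by simp
  have Fsub: "F \<theta>1 = F \<theta>2 + inner (\<theta>1 - \<theta>2) D" using zero by simp
  have eq1: "Breg_w M \<phi> t k F \<theta>1 \<theta>a / E_w M \<phi> (expfam t k F \<theta>a) - ln (E_w M \<phi> (expfam t k F \<theta>a)) = g \<alpha>s"
    unfolding B1 lnEa gas d1 inner_scaleR_left unfolding Fsub by (simp add: algebra_simps inner_diff_left)
  have eq2: "Breg_w M \<phi> t k F \<theta>2 \<theta>a / E_w M \<phi> (expfam t k F \<theta>a) - ln (E_w M \<phi> (expfam t k F \<theta>a)) = g \<alpha>s"
    unfolding B2 lnEa gas d2 inner_scaleR_left unfolding Fsub by (simp add: algebra_simps inner_diff_left)
  have BB: "Breg_w M \<phi> t k F \<theta>1 \<theta>a = Breg_w M \<phi> t k F \<theta>2 \<theta>a"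
  proof -
    have "Breg_w M \<phi> t k F \<theta>1 \<theta>a / E_w M \<phi> (expfam t k F \<theta>a) = Breg_w M \<phi> t k F \<theta>2 \<theta>a / E_w M \<phi> (expfam t k F \<theta>a)"
      using eq1 eq2 by linarith
    then show ?thesis using Eapos by (simp add: divide_cancel_right)
  qed
  show ?thesis
    unfolding Let_def
    using DC DB_eq[OF as01] BB eq1 eq2
    unfolding \<theta>a_def th_def g_def by simp
qed

end
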